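(* Let $\mathbb{F}\in\{\mathbb{R},\mathbb{C}\}$, $\boldsymbol A\in\mathbb{F}^{m\times n}$, $k\in\{1,\dots,n\}$, and suppose there exist a map $\Delta:\mathbb{R}^m\to\mathbb{F}^n$ and $c_0>0$ with $\mathrm{dist}(\Delta(|\boldsymbol A\boldsymbol x|),\boldsymbol x)\le c_0\,\sigma_k(\boldsymbol x)_2$ for all $\boldsymbol x\in\mathbb{F}^n$. Then for every $\boldsymbol\eta\in\mathbb{F}^n$ with $\boldsymbol A\boldsymbol\eta=\boldsymbol 0$ and every $T\subset\{1,\dots,n\}$ with $\#T\le 2k$, \[ \|\boldsymbol\eta\|_2\le c_0\,\sigma_{2k}(\boldsymbol\eta)_2\le c_0\,\|\boldsymbol\eta_{T^c}\|_2 . \]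
   Context: $|\boldsymbol u|$ is the entrywise modulus. $\mathrm{dist}(\boldsymbol x,\boldsymbol y)=\min_{c\in\mathbb F,|c|=1}\|\boldsymbol x-c\boldsymbol y\|_2$. $\Sigma_s=\{\boldsymbol z\in\mathbb F^n:\|\boldsymbol z\|_0\le s\}$, $\sigma_s(\boldsymbol x)_2=\min_{\boldsymbol z\in\Sigma_s}\mathrm{dist}(\boldsymbol x,\boldsymbol z)$. For $T\subset\{1,\dots,n\}$, $\boldsymbol\eta_{T}$ is the vector agreeing with $\boldsymbol\eta$ on $T$ and zero elsewhere, and $T^c$ is the complement of $T$. *)

theory Defs
  imports "HOL-Analysis.Analysis"
begin

definition vabs :: "'a::real_normed_field ^ 'm \<Rightarrow> real ^ 'm" where
  "vabs v = (\<chi> i. norm (v $ i))"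

text \<open>Phase-invariant distance: min over unimodular scalars c of the Euclidean norm of x - c y.
  (The minimum is attained; we write it as an infimum.)\<close>
definition pdist :: "'a::real_normed_field ^ 'n \<Rightarrow> 'a ^ 'n \<Rightarrow> real" where
  "pdist x y = (INF c \<in> {c::'a. norm c = 1}. norm (x - c *s y))"

definition sparse_set :: "nat \<Rightarrow> ('a::zero ^ 'n) set" where
  "sparse_set s = {z. card {i. z $ i \<noteq> 0} \<le> s}"

definition sigma_err :: "nat \<Rightarrow> 'a::real_normed_field ^ 'n \<Rightarrow> real" where
  "sigma_err s x = (INF z \<in> sparse_set s. pdist x z)"

definition restr :: "'n set \<Rightarrow> 'a::zero ^ 'n \<Rightarrow> 'a ^ 'n" where
  "restr T v = (\<chi> i. if i \<in> T then v $ i else 0)"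

end

theory Submission
  imports Defs
begin

lemma unit_nonempty: "{c::'a::real_normed_field. norm c = 1} \<noteq> {}"
  by (metis (mono_tags) empty_iff mem_Collect_eq norm_one)

lemma pdist_bdd: "bdd_below ((\<lambda>c. norm (x - c *s y)) ` {c::'a::real_normed_field. norm c = 1})"
  by (rule bdd_belowI[where m=0]) auto

lemma pdist_nonneg: "0 \<le> pdist (x::'a::real_normed_field^'n) y"
  unfolding pdist_def by (rule cINF_greatest[OF unit_nonempty]) auto

lemma pdist_le: "norm (c::'a::real_normed_field) = 1 \<Longrightarrow> pdist (x::'a^'n) y \<le> norm (x - c *s y)"
  unfolding pdist_def by (rule cINF_lower[OF pdist_bdd]) auto

lemma pdist_lt: "pdist (x::'a::real_normed_field^'n) y < e \<Longrightarrow> \<exists>c. norm c = 1 \<and> norm (x - c *s y) < e"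
  unfolding pdist_def using cINF_less_iff[OF unit_nonempty pdist_bdd] by auto

lemma sigma_le: "z \<in> sparse_set s \<Longrightarrow> sigma_err s (x::'a::real_normed_field^'n) \<le> pdist x z"
  unfolding sigma_err_def
  by (rule cINF_lower) (auto intro!: bdd_belowI[where m=0] pdist_nonneg)

lemma restr_sparse:
  fixes v :: "'a::zero ^ 'n::finite"
  shows "card T \<le> s \<Longrightarrow> restr T v \<in> sparse_set s"
  unfolding sparse_set_def
proof
  assume "card T \<le> s"
  have "{i. restr T v $ i \<noteq> 0} \<subseteq> T" by (auto simp: restr_def)
  then have "card {i. restr T v $ i \<noteq> 0} \<le> card T" by (intro card_mono) auto
  with \<open>card T \<le> s\<close> show "card {i. restr T v $ i \<noteq> 0} \<le> s" by simp
qed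

lemma key:
  fixes A :: "'a::real_normed_field ^ 'n::finite ^ 'm::finite" and \<Delta> :: "real ^ 'm \<Rightarrow> 'a ^ 'n"
  assumes H: "\<forall>x :: 'a ^ 'n. pdist (\<Delta> (vabs (A *v x))) x \<le> c0 * sigma_err k x"
    and c0: "c0 > 0" and Aeta: "A *v \<eta> = 0" and cT: "card T \<le> 2 * k"
  shows "norm \<eta> \<le> c0 * norm (restr (- T) \<eta>)"
proof -
  obtain T1 where T1: "T1 \<subseteq> T" "card T1 = min k (card T)" "finite T1"
    using obtain_subset_with_card_n[of "min k (card T)" T] by auto
  define u where "u = restr T1 \<eta>"
  define v where "v = restr (- T1) \<eta>"
  define w where "w = restr (T - T1) \<eta>"
  have uv: "u + v = \<eta>" by (simp add: u_def v_def restr_def vec_eq_iff)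
  have "A *v u + A *v v = 0" using Aeta uv by (metis matrix_vector_right_distrib)
  then have "A *v u = - (A *v v)" by (simp add: eq_neg_iff_add_eq_0)
  then have eq: "vabs (A *v u) = vabs (A *v v)" by (simp add: vabs_def)
  define z where "z = \<Delta> (vabs (A *v v))"
  have "sigma_err k u \<le> pdist u u"
    by (rule sigma_le) (simp add: u_def restr_sparse T1)
  also have "\<dots> \<le> norm (u - 1 *s u)" by (rule pdist_le) simp
  finally have "sigma_err k u \<le> 0" by simp
  then have h1: "pdist z u \<le> 0" using H[rule_format, of u] eq c0 z_def
    by (smt (verit) mult_nonneg_nonpos less_imp_le)
  have "card (T - T1) = card T - card T1"
    using T1 by (simp add: card_Diff_subset)
  then have "card (T - T1) \<le> k" using T1 cT by simp
  then have "sigma_err k v \<le> pdist v w"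
    by (intro sigma_le) (simp add: w_def restr_sparse)
  also have "\<dots> \<le> norm (v - 1 *s w)" by (rule pdist_le) simp
  also have "v - 1 *s w = restr (- T) \<eta>"
    using T1 by (auto simp: v_def w_def restr_def vec_eq_iff)
  finally have "sigma_err k v \<le> norm (restr (- T) \<eta>)" .
  then have h2: "pdist z v \<le> c0 * norm (restr (- T) \<eta>)"
    using H[rule_format, of v] z_def c0
    by (smt (verit) mult_left_mono)
  show ?thesis
  proof (rule field_le_epsilon)
    fix e :: real assume e: "0 < e"
    then obtain c where c: "norm c = 1" "norm (z - c *s u) < e"
      using pdist_lt[of z u e] h1 by auto
    have "norm \<eta> - e \<le> pdist z v"
      unfolding pdist_def
    proof (rule cINF_greatest[OF unit_nonempty])
      fix d :: 'a assume "d \<in> {c. norm c = 1}"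
      then have d: "norm d = 1" by simp
      have "norm \<eta> = norm (c *s u - d *s v)"
      proof (rule antisym; rule norm_le_componentwise_cart)
        fix i show "norm (\<eta> $ i) \<le> norm ((c *s u - d *s v) $ i)"
          using c d by (auto simp: u_def v_def restr_def norm_mult)
      next
        fix i show "norm ((c *s u - d *s v) $ i) \<le> norm (\<eta> $ i)"
          using c d by (auto simp: u_def v_def restr_def norm_mult)
      qed
      also have "\<dots> \<le> norm (c *s u - z) + norm (z - d *s v)"
      proof -
        have eq2: "c *s u - d *s v = (c *s u - z) + (z - d *s v)" by (simp add: algebra_simps)
        show ?thesis by (subst eq2) (rule norm_triangle_ineq)
      qed
      also have "norm (c *s u - z) = norm (z - c *s u)" by (rule norm_minus_commute)
      finally show "norm \<eta> - e \<le> norm (z - d *s v)" using c by simp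
    qed
    with h2 show "norm \<eta> \<le> c0 * norm (restr (- T) \<eta>) + e" by simp
  qed
qed

lemma generic:
  fixes A :: "'a::real_normed_field ^ 'n::finite ^ 'm::finite" and \<Delta> :: "real ^ 'm \<Rightarrow> 'a ^ 'n"
  assumes H: "\<forall>x :: 'a ^ 'n. pdist (\<Delta> (vabs (A *v x))) x \<le> c0 * sigma_err k x"
    and c0: "c0 > 0" and Aeta: "A *v \<eta> = 0" and cT: "card T \<le> 2 * k"
  shows "norm \<eta> \<le> c0 * sigma_err (2 * k) \<eta> \<and>
         c0 * sigma_err (2 * k) \<eta> \<le> c0 * norm (restr (- T) \<eta>)"
proof
  have "norm \<eta> / c0 \<le> sigma_err (2 * k) \<eta>"
    unfolding sigma_err_def
  proof (rule cINF_greatest)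
    show "sparse_set (2 * k) \<noteq> ({} :: ('a^'n) set)" proof -
      have "restr {} \<eta> \<in> sparse_set (2*k)" by (rule restr_sparse) simp
      then show ?thesis by blast
    qed
  next
    fix y :: "'a^'n" assume y: "y \<in> sparse_set (2 * k)"
    define S where "S = {i. y $ i \<noteq> 0}"
    have cS: "card S \<le> 2 * k" using y by (simp add: sparse_set_def S_def)
    show "norm \<eta> / c0 \<le> pdist \<eta> y"
      unfolding pdist_def
    proof (rule cINF_greatest[OF unit_nonempty])
      fix c :: 'a assume "c \<in> {c. norm c = 1}"
      have "norm \<eta> \<le> c0 * norm (restr (- S) \<eta>)" by (rule key[OF H c0 Aeta cS])
      also have "norm (restr (- S) \<eta>) \<le> norm (\<eta> - c *s y)"
        by (rule norm_le_componentwise_cart) (auto simp: restr_def S_def)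
      finally have "norm \<eta> \<le> c0 * norm (\<eta> - c *s y)" using c0 by simp
      then show "norm \<eta> / c0 \<le> norm (\<eta> - c *s y)" using c0 by (simp add: divide_simps mult.commute)
    qed
  qed
  then show "norm \<eta> \<le> c0 * sigma_err (2 * k) \<eta>" using c0 by (simp add: divide_simps mult.commute)
next
  have "sigma_err (2 * k) \<eta> \<le> pdist \<eta> (restr T \<eta>)"
    by (rule sigma_le) (simp add: restr_sparse cT)
  also have "\<dots> \<le> norm (\<eta> - 1 *s restr T \<eta>)" by (rule pdist_le) simp
  also have "\<eta> - 1 *s restr T \<eta> = restr (- T) \<eta>" by (auto simp: restr_def vec_eq_iff)
  finally show "c0 * sigma_err (2 * k) \<eta> \<le> c0 * norm (restr (- T) \<eta>)" using c0 by simp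
qed

theorem mainTheorem6:
  fixes dummy_m :: "'m::finite itself" and dummy_n :: "'n::finite itself"
  shows
  "(\<forall>(A :: real ^ 'n ^ 'm) (k::nat) (\<Delta> :: real ^ 'm \<Rightarrow> real ^ 'n) (c0::real).
      1 \<le> k \<and> k \<le> CARD('n) \<and> c0 > 0 \<and>
      (\<forall>x :: real ^ 'n. pdist (\<Delta> (vabs (A *v x))) x \<le> c0 * sigma_err k x) \<longrightarrow>
      (\<forall>(\<eta> :: real ^ 'n) (T :: 'n set). A *v \<eta> = 0 \<and> card T \<le> 2 * k \<longrightarrow>
         norm \<eta> \<le> c0 * sigma_err (2 * k) \<eta> \<and>
         c0 * sigma_err (2 * k) \<eta> \<le> c0 * norm (restr (- T) \<eta>)))
   \<and>
   (\<forall>(A :: complex ^ 'n ^ 'm) (k::nat) (\<Delta> :: real ^ 'm \<Rightarrow> complex ^ 'n) (c0::real).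
      1 \<le> k \<and> k \<le> CARD('n) \<and> c0 > 0 \<and>
      (\<forall>x :: complex ^ 'n. pdist (\<Delta> (vabs (A *v x))) x \<le> c0 * sigma_err k x) \<longrightarrow>
      (\<forall>(\<eta> :: complex ^ 'n) (T :: 'n set). A *v \<eta> = 0 \<and> card T \<le> 2 * k \<longrightarrow>
         norm \<eta> \<le> c0 * sigma_err (2 * k) \<eta> \<and>
         c0 * sigma_err (2 * k) \<eta> \<le> c0 * norm (restr (- T) \<eta>)))"
proof (rule conjI; intro allI impI)
  fix A :: "real ^ 'n ^ 'm" and k and \<Delta> :: "real ^ 'm \<Rightarrow> real ^ 'n" and c0 :: real and \<eta> :: "real ^ 'n" and T :: "'n set"
  assume "1 \<le> k \<and> k \<le> CARD('n) \<and> c0 > 0 \<and>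
      (\<forall>x :: real ^ 'n. pdist (\<Delta> (vabs (A *v x))) x \<le> c0 * sigma_err k x)"
    and "A *v \<eta> = 0 \<and> card T \<le> 2 * k"
  then show "norm \<eta> \<le> c0 * sigma_err (2 * k) \<eta> \<and>
         c0 * sigma_err (2 * k) \<eta> \<le> c0 * norm (restr (- T) \<eta>)"
    using generic[of \<Delta> A c0 k \<eta> T] by blast
next
  fix A :: "complex ^ 'n ^ 'm" and k and \<Delta> :: "real ^ 'm \<Rightarrow> complex ^ 'n" and c0 :: real and \<eta> :: "complex ^ 'n" and T :: "'n set"
  assume "1 \<le> k \<and> k \<le> CARD('n) \<and> c0 > 0 \<and>
      (\<forall>x :: complex ^ 'n. pdist (\<Delta> (vabs (A *v x))) x \<le> c0 * sigma_err k x)"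
    and "A *v \<eta> = 0 \<and> card T \<le> 2 * k"
  then show "norm \<eta> \<le> c0 * sigma_err (2 * k) \<eta> \<and>
         c0 * sigma_err (2 * k) \<eta> \<le> c0 * norm (restr (- T) \<eta>)"
    using generic[of \<Delta> A c0 k \<eta> T] by blast
qed

end
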